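(* Let $G$ be a graph, let $A,B\subseteq V(G)$ be disjoint independent sets in $G$ each of size at least two, and let $v\in V(G)\setminus(A\cup B)$. Assume that every $a\in A$ has at least one neighbour and at least one non-neighbour in $B$, and every $b\in B$ has at least one neighbour and at least one non-neighbour in $A$. Then one can admissibly remove from $G$ a subset of $A\cup B\cup\{v\}$ which contains $v$ and contains at most two vertices of $A$ and at most two vertices of $B$.
   Context: Removing a set $T$ of vertices from a graph $G$ is a simple admissible removal if $T$ is an independent set in $G$ and the number of edges between $T$ and $V(G)\setminus T$ is even. Removing a (not necessarily independent) set of vertices is admissible if it can be realised by a sequence of simple admissible removals, each performed in the graph remaining after the previous ones. Degrees are always taken in the current remaining graph. *)

theory Defs
  imports Main
begin

text \<open>A (finite simple) graph is given by a vertex set V and a symmetric, irreflexive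
edge relation E; only edges with both ends in the current vertex set count.
Removing vertices means passing to the induced subgraph on the remaining vertices.\<close>

definition independent :: "'a set \<Rightarrow> ('a \<Rightarrow> 'a \<Rightarrow> bool) \<Rightarrow> 'a set \<Rightarrow> bool" where
  "independent V E T \<longleftrightarrow> T \<subseteq> V \<and> (\<forall>x\<in>T. \<forall>y\<in>T. \<not> E x y)"

definition simple_admissible :: "'a set \<Rightarrow> ('a \<Rightarrow> 'a \<Rightarrow> bool) \<Rightarrow> 'a set \<Rightarrow> bool" where
  "simple_admissible V E T \<longleftrightarrow>
     independent V E T \<and> even (card {(x, y). x \<in> T \<and> y \<in> V - T \<and> E x y})"

inductive admissible :: "'a set \<Rightarrow> ('a \<Rightarrow> 'a \<Rightarrow> bool) \<Rightarrow> 'a set \<Rightarrow> bool" where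
  adm_empty: "admissible V E {}"
| adm_step: "simple_admissible V E T \<Longrightarrow> admissible (V - T) E S \<Longrightarrow> admissible V E (T \<union> S)"

end

theory Submission
  imports Defs
begin

definition deg :: "'a set \<Rightarrow> ('a \<Rightarrow> 'a \<Rightarrow> bool) \<Rightarrow> 'a \<Rightarrow> nat" where
  "deg V E x = card {y\<in>V. E x y}"

lemma deg_rm_adj: assumes "finite V" "u \<in> V" "E x u"
  shows "deg V E x = Suc (deg (V - {u}) E x)"
proof -
  have "{y\<in>V - {u}. E x y} = {y\<in>V. E x y} - {u}" by auto
  moreover have "u \<in> {y\<in>V. E x y}" using assms by auto
  moreover have "finite {y\<in>V. E x y}" using assms by auto
  ultimately show ?thesis unfolding deg_def
    by (metis card_Suc_Diff1)
qed

lemma deg_rm_non: assumes "\<not> E x u"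
  shows "deg (V - {u}) E x = deg V E x"
proof -
  have "{y\<in>V - {u}. E x y} = {y\<in>V. E x y}" using assms by auto
  thus ?thesis unfolding deg_def by simp
qed

lemma sa_single: assumes "finite V" "x \<in> V" "\<not> E x x" "even (deg V E x)"
  shows "simple_admissible V E {x}"
proof -
  have "{(a, b). a \<in> {x} \<and> b \<in> V - {x} \<and> E a b} = Pair x ` {y\<in>V. E x y}"
    using assms(3) by auto
  moreover have "card (Pair x ` {y\<in>V. E x y}) = deg V E x"
    unfolding deg_def by (simp add: card_image inj_on_def)
  ultimately show ?thesis using assms unfolding simple_admissible_def independent_def
    by simp
qed

lemma sa_pair: assumes "finite V" "x \<in> V" "y \<in> V" "x \<noteq> y" "\<not> E x x" "\<not> E y y"
  "\<not> E x y" "\<not> E y x" "even (deg V E x + deg V E y)"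
  shows "simple_admissible V E {x, y}"
proof -
  have eq: "{(a, b). a \<in> {x, y} \<and> b \<in> V - {x, y} \<and> E a b}
     = Pair x ` {z\<in>V. E x z} \<union> Pair y ` {z\<in>V. E y z}"
    using assms by auto
  have "card (Pair x ` {z\<in>V. E x z} \<union> Pair y ` {z\<in>V. E y z})
      = card (Pair x ` {z\<in>V. E x z}) + card (Pair y ` {z\<in>V. E y z})"
    by (rule card_Un_disjoint) (use assms in auto)
  also have "\<dots> = deg V E x + deg V E y"
    unfolding deg_def by (simp add: card_image inj_on_def)
  finally show ?thesis using assms eq unfolding simple_admissible_def independent_def
    by auto
qed

lemma adm_of_sa: "simple_admissible V E T \<Longrightarrow> admissible V E T"
  using adm_step[of V E T "{}"] adm_empty[of "V - T" E] by simp

lemma card_le2: assumes "X \<subseteq> {p, q}" shows "card X \<le> 2"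
proof -
  have "card X \<le> card {p, q}" using assms by (intro card_mono) auto
  also have "\<dots> \<le> 2" by (cases "p = q") auto
  finally show ?thesis .
qed

theorem mainTheorem7:
  fixes V :: "'a set" and E :: "'a \<Rightarrow> 'a \<Rightarrow> bool" and A B :: "'a set" and v :: 'a
  assumes "finite V"
    and "\<forall>x y. E x y \<longrightarrow> E y x"
    and "\<forall>x. \<not> E x x"
    and "A \<inter> B = {}"
    and "independent V E A"
    and "independent V E B"
    and "card A \<ge> 2"
    and "card B \<ge> 2"
    and "v \<in> V - (A \<union> B)"
    and "\<forall>a\<in>A. (\<exists>b\<in>B. E a b) \<and> (\<exists>b\<in>B. \<not> E a b)"
    and "\<forall>b\<in>B. (\<exists>a\<in>A. E b a) \<and> (\<exists>a\<in>A. \<not> E b a)"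
  shows "\<exists>S. S \<subseteq> A \<union> B \<union> {v} \<and> v \<in> S \<and> card (S \<inter> A) \<le> 2 \<and> card (S \<inter> B) \<le> 2
             \<and> admissible V E S"
proof -
  note fin = assms(1)
  have sym: "\<And>x y. E x y \<Longrightarrow> E y x" using assms(2) by blast
  have irr: "\<And>x. \<not> E x x" using assms(3) by blast
  have AV: "A \<subseteq> V" and BV: "B \<subseteq> V" using assms(5,6) unfolding independent_def by auto
  have Ai: "\<And>x y. x \<in> A \<Longrightarrow> y \<in> A \<Longrightarrow> \<not> E x y" using assms(5) unfolding independent_def by auto
  have vV: "v \<in> V" and vA: "v \<notin> A" and vB: "v \<notin> B" using assms(9) by auto
  define d where "d = deg V E"
  show ?thesis
  proof (cases "even (d v)")
    case True
    have "admissible V E {v}" using sa_single[where E=E, OF fin vV irr[of v]] True adm_of_sa d_def by auto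
    thus ?thesis using vA vB by (intro exI[of _ "{v}"]) (auto simp: insert_commute)
  next
    case vodd: False
    show ?thesis
    proof (cases "\<exists>u\<in>A \<union> B. even (d u) \<and> E u v")
      case True
      then obtain u where u: "u \<in> A \<union> B" "even (d u)" "E u v" by blast
      have uV: "u \<in> V" using u AV BV by auto
      have "d v = Suc (deg (V - {u}) E v)" unfolding d_def
        using deg_rm_adj[where E=E, OF fin uV sym[OF u(3)]] .
      hence ev: "even (deg (V - {u}) E v)" using vodd by simp
      have "u \<noteq> v" using u vA vB by auto
      have "admissible (V - {u}) E {v}"
        using adm_of_sa[OF sa_single[of "V - {u}" v E]] fin vV \<open>u \<noteq> v\<close> irr ev by auto
      hence "admissible V E ({u} \<union> {v})"
        using adm_step sa_single[where E=E, OF fin uV irr[of u]] u(2) d_def by blast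
      moreover have "card ({u, v} \<inter> A) \<le> 2" "card ({u, v} \<inter> B) \<le> 2"
        by (rule card_le2, blast)+
      ultimately show ?thesis using u by (intro exI[of _ "{u, v}"]) (auto simp: insert_commute)
    next
      case n2: False
      show ?thesis
      proof (cases "\<exists>u\<in>A \<union> B. odd (d u) \<and> \<not> E u v")
        case True
        then obtain u where u: "u \<in> A \<union> B" "odd (d u)" "\<not> E u v" by blast
        have uV: "u \<in> V" using u AV BV by auto
        have "u \<noteq> v" using u vA vB by auto
        have "simple_admissible V E {u, v}"
          using sa_pair[where E=E, OF fin uV vV \<open>u \<noteq> v\<close> irr[of u] irr[of v] u(3)] u sym vodd d_def by auto
        hence "admissible V E {u, v}" by (rule adm_of_sa)
        moreover have "card ({u, v} \<inter> A) \<le> 2" "card ({u, v} \<inter> B) \<le> 2"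
          by (rule card_le2, blast)+
        ultimately show ?thesis using u by (intro exI[of _ "{u, v}"]) (auto simp: insert_commute)
      next
        case n3: False
        show ?thesis
        proof (cases "\<exists>u\<in>A \<union> B. even (d u) \<and> \<not> E u v")
          case True
          then obtain u where u: "u \<in> A \<union> B" "even (d u)" "\<not> E u v" by blast
          have uV: "u \<in> V" using u AV BV by auto
          have "\<exists>w\<in>A \<union> B. E u w" using u assms(10,11) by blast
          then obtain w where w: "w \<in> A \<union> B" "E u w" by blast
          have wV: "w \<in> V" using w AV BV by auto
          have wu: "w \<noteq> u" using w irr by auto
          have wv: "w \<noteq> v" "u \<noteq> v" using w u vA vB by auto
          have sau: "simple_admissible V E {u}" using sa_single[where E=E, OF fin uV irr[of u]] u d_def by auto
          have dw: "d w = Suc (deg (V - {u}) E w)" unfolding d_def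
            using deg_rm_adj[where E=E, OF fin uV sym[OF w(2)]] .
          have dv: "deg (V - {u}) E v = d v" unfolding d_def
            using deg_rm_non[of E v u V] u(3) sym by blast
          have f1: "finite (V - {u})" using fin by auto
          have wV1: "w \<in> V - {u}" and vV1: "v \<in> V - {u}" using wV vV wu wv by auto
          show ?thesis
          proof (cases "even (d w)")
            case True
            hence nwv: "\<not> E w v" using n2 w by blast
            have "simple_admissible (V - {u}) E {w, v}"
              using sa_pair[where E=E, OF f1 wV1 vV1 wv(1) irr[of w] irr[of v] nwv] nwv sym dw dv vodd True by auto
            hence "admissible V E ({u} \<union> {w, v})" using adm_step sau adm_of_sa by blast
            moreover have "card ({u, w, v} \<inter> A) \<le> 2" "card ({u, w, v} \<inter> B) \<le> 2"
              by (rule card_le2, use vA vB in blast)+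
            ultimately show ?thesis using u w by (intro exI[of _ "{u, w, v}"]) (auto simp: insert_commute)
          next
            case False
            hence Ewv: "E w v" using n3 w by blast
            have saw: "simple_admissible (V - {u}) E {w}"
              using sa_single[where E=E, OF f1 wV1 irr[of w]] dw False by auto
            have "deg (V - {u}) E v = Suc (deg (V - {u} - {w}) E v)"
              using deg_rm_adj[where E=E, OF f1 wV1 sym[OF Ewv]] .
            hence "even (deg (V - {u} - {w}) E v)" using dv vodd by simp
            moreover have "v \<in> V - {u} - {w}" using vV1 wv by auto
            ultimately have "admissible (V - {u} - {w}) E {v}"
              using adm_of_sa[OF sa_single[of "V - {u} - {w}" v E]] f1 irr by auto
            hence "admissible (V - {u}) E ({w} \<union> {v})" using adm_step saw by blast
            hence "admissible V E ({u} \<union> ({w} \<union> {v}))" using adm_step sau by blast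
            moreover have "card ({u, w, v} \<inter> A) \<le> 2" "card ({u, w, v} \<inter> B) \<le> 2"
              by (rule card_le2, use vA vB in blast)+
            ultimately show ?thesis using u w by (intro exI[of _ "{u, w, v}"]) (auto simp: insert_commute)
          qed
        next
          case n4: False
          have all: "\<And>u. u \<in> A \<union> B \<Longrightarrow> odd (d u) \<and> E u v" using n2 n3 n4 by blast
          have "B \<noteq> {}" using assms(8) by auto
          then obtain b where b: "b \<in> B" by blast
          obtain a1 a2 where a: "a1 \<in> A" "a2 \<in> A" "E b a1" "\<not> E b a2"
            using assms(11) b by blast
          have a12: "a1 \<noteq> a2" using a by auto
          have bA: "b \<notin> A" using b assms(4) by auto
          have a1V: "a1 \<in> V" and a2V: "a2 \<in> V" and bV: "b \<in> V" using a b AV BV by auto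
          have a1v: "a1 \<noteq> v" "a2 \<noteq> v" using a vA by auto
          have sa12: "simple_admissible V E {a1, a2}"
            using sa_pair[where E=E, OF fin a1V a2V a12 irr[of a1] irr[of a2] Ai[OF a(1,2)] Ai[OF a(2,1)]]
              all[of a1] all[of a2] a d_def by auto
          have f1: "finite (V - {a1})" and f2: "finite (V - {a1} - {a2})" using fin by auto
          have eqV: "V - {a1, a2} = V - {a1} - {a2}" by auto
          have a2V1: "a2 \<in> V - {a1}" using a2V a12 by auto
          have db1: "d b = Suc (deg (V - {a1}) E b)" unfolding d_def
            using deg_rm_adj[where E=E, OF fin a1V a(3)] .
          have db2: "deg (V - {a1} - {a2}) E b = deg (V - {a1}) E b"
            using deg_rm_non[of E b a2] a(4) by blast
          have dv1: "d v = Suc (deg (V - {a1}) E v)" unfolding d_def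
            using deg_rm_adj[where E=E, OF fin a1V sym] all[of a1] a by auto
          have dv2: "deg (V - {a1}) E v = Suc (deg (V - {a1} - {a2}) E v)"
            using deg_rm_adj[where E=E, OF f1 a2V1 sym] all[of a2] a by auto
          have bV2: "b \<in> V - {a1} - {a2}" using bV bA a by auto
          have sab: "simple_admissible (V - {a1} - {a2}) E {b}"
            using sa_single[where E=E, OF f2 bV2 irr[of b]] db1 db2 all[of b] b by auto
          have dv3: "deg (V - {a1} - {a2}) E v = Suc (deg (V - {a1} - {a2} - {b}) E v)"
            using deg_rm_adj[where E=E, OF f2 bV2 sym] all[of b] b by auto
          have "even (deg (V - {a1} - {a2} - {b}) E v)" using dv1 dv2 dv3 vodd by simp
          moreover have "v \<in> V - {a1} - {a2} - {b}" using vV a1v b vB by auto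
          ultimately have "admissible (V - {a1} - {a2} - {b}) E {v}"
            using adm_of_sa[OF sa_single[of "V - {a1} - {a2} - {b}" v E]] fin irr by auto
          hence "admissible (V - {a1} - {a2}) E ({b} \<union> {v})" using adm_step sab by blast
          hence "admissible V E ({a1, a2} \<union> ({b} \<union> {v}))" using adm_step sa12 eqV by metis
          moreover have "card ({a1, a2, b, v} \<inter> A) \<le> 2"
            by (rule card_le2[of _ a1 a2], use vA bA in blast)
          moreover have "card ({a1, a2, b, v} \<inter> B) \<le> 2"
            by (rule card_le2[of _ b b], use vB a assms(4) in blast)
          ultimately show ?thesis using a b by (intro exI[of _ "{a1, a2, b, v}"]) (auto simp: insert_commute)
        qed
      qed
    qed
  qed
qed

end
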